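(* The square root of $2$ is irrational in the Zykov field: there is no element $x$ of the Zykov field with $x\cdot x=K_2$ (where $K_2=K_1+K_1$ plays the role of $2$).
   Context: Graphs are finite simple graphs up to isomorphism. The Zykov join of $G=(V,E)$, $H=(W,F)$ is $G+H=(V\cup W,\,E\cup F\cup\{\{v,w\}:v\in V,w\in W\})$, and the Zykov product $G\cdot H$ has vertex set $V\times W$ with $(a,b)\sim(c,d)$ iff $\{a,c\}\in E$ or $\{b,d\}\in F$. The Zykov ring is the Grothendieck group of (graphs, $+$) with $\cdot$ extended bilinearly; it is an integral domain, and the Zykov field is its field of fractions. *)

theory Defs
  imports Main
begin

text \<open>Finite simple graphs, concretely: a graph is a pair (n, E) with vertex set
  {0..<n} and a symmetric irreflexive edge relation E supported on {0..<n}.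
  Graphs are compared up to isomorphism.\<close>

type_synonym graph = "nat \<times> (nat \<Rightarrow> nat \<Rightarrow> bool)"

definition graph_wf :: "graph \<Rightarrow> bool" where
  "graph_wf G \<longleftrightarrow> (\<forall>u v. snd G u v \<longrightarrow> u < fst G \<and> v < fst G \<and> u \<noteq> v \<and> snd G v u)"

definition graph_iso :: "graph \<Rightarrow> graph \<Rightarrow> bool" where
  "graph_iso G H \<longleftrightarrow> fst G = fst H \<and>
     (\<exists>f. bij_betw f {..<fst G} {..<fst H} \<and>
          (\<forall>u<fst G. \<forall>v<fst G. snd G u v \<longleftrightarrow> snd H (f u) (f v)))"

definition graph_empty :: graph where
  "graph_empty = (0, \<lambda>_ _. False)"

definition graph_K1 :: graph where
  "graph_K1 = (1, \<lambda>_ _. False)"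

definition zjoin :: "graph \<Rightarrow> graph \<Rightarrow> graph" where
  "zjoin G H = (let n = fst G; m = fst H; E = snd G; F = snd H in
     (n + m, \<lambda>u v. (u < n \<and> v < n \<and> E u v)
                 \<or> (n \<le> u \<and> n \<le> v \<and> u < n + m \<and> v < n + m \<and> F (u - n) (v - n))
                 \<or> (u < n \<and> n \<le> v \<and> v < n + m)
                 \<or> (v < n \<and> n \<le> u \<and> u < n + m)))"

text \<open>Zykov product: vertex (a,b) is encoded as a*m+b; (a,b)~(c,d) iff a~c in G or b~d in H.\<close>
definition zprod :: "graph \<Rightarrow> graph \<Rightarrow> graph" where
  "zprod G H = (let n = fst G; m = fst H; E = snd G; F = snd H in
     (n * m, \<lambda>u v. u < n * m \<and> v < n * m \<and> (E (u div m) (v div m) \<or> F (u mod m) (v mod m))))"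

text \<open>Zykov ring: Grothendieck group of (graphs, join). An element is a formal
  difference P - N of graphs; P - N = P' - N' iff P+N'+K and P'+N+K are
  isomorphic for some graph K.\<close>
type_synonym zring = "graph \<times> graph"

definition zr_wf :: "zring \<Rightarrow> bool" where
  "zr_wf x \<longleftrightarrow> graph_wf (fst x) \<and> graph_wf (snd x)"

definition zr_eq :: "zring \<Rightarrow> zring \<Rightarrow> bool" where
  "zr_eq x y \<longleftrightarrow> (\<exists>K. graph_wf K \<and>
     graph_iso (zjoin (zjoin (fst x) (snd y)) K) (zjoin (zjoin (fst y) (snd x)) K))"

definition zr_zero :: zring where
  "zr_zero = (graph_empty, graph_empty)"

definition zr_one :: zring where
  "zr_one = (graph_K1, graph_empty)"

definition zr_K2 :: zring where
  "zr_K2 = (zjoin graph_K1 graph_K1, graph_empty)"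

text \<open>(P - N)(Q - M) = (PQ + NM) - (PM + NQ)\<close>
definition zr_mul :: "zring \<Rightarrow> zring \<Rightarrow> zring" where
  "zr_mul x y = (zjoin (zprod (fst x) (fst y)) (zprod (snd x) (snd y)),
                 zjoin (zprod (fst x) (snd y)) (zprod (snd x) (fst y)))"

text \<open>Zykov field: field of fractions a/b of the Zykov ring, b \<noteq> 0.\<close>
type_synonym zfield = "zring \<times> zring"

definition zf_wf :: "zfield \<Rightarrow> bool" where
  "zf_wf x \<longleftrightarrow> zr_wf (fst x) \<and> zr_wf (snd x) \<and> \<not> zr_eq (snd x) zr_zero"

definition zf_eq :: "zfield \<Rightarrow> zfield \<Rightarrow> bool" where
  "zf_eq x y \<longleftrightarrow> zr_eq (zr_mul (fst x) (snd y)) (zr_mul (fst y) (snd x))"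

definition zf_mul :: "zfield \<Rightarrow> zfield \<Rightarrow> zfield" where
  "zf_mul x y = (zr_mul (fst x) (fst y), zr_mul (snd x) (snd y))"

definition zf_K2 :: zfield where
  "zf_K2 = (zr_K2, zr_one)"

end

theory Submission imports Defs "HOL-Library.FuncSet" begin

lemma sq2: fixes p q :: int assumes "p^2 = 2*q^2" shows "q = 0"
proof -
  have "\<forall>p q::int. nat \<bar>q\<bar> = k \<longrightarrow> p^2 = 2*q^2 \<longrightarrow> q = 0" for k
  proof (induction k rule: less_induct)
    case (less k)
    show ?case
    proof (intro allI impI)
      fix p q :: int assume k: "nat \<bar>q\<bar> = k" and e: "p^2 = 2*q^2"
      have "even (p^2)" using e by simp
      then have "even p" by simp
      then obtain r where r: "p = 2*r" by blast
      have e2: "q^2 = 2*r^2" using e r by (simp add: power2_eq_square)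
      have "even (q^2)" using e2 by simp
      then have "even q" by simp
      then obtain s where s: "q = 2*s" by blast
      have e3: "r^2 = 2*s^2" using e2 s by (simp add: power2_eq_square)
      show "q = 0"
      proof (rule ccontr)
        assume "q \<noteq> 0"
        then have "nat \<bar>s\<bar> < k" using s k by auto
        then have "s = 0" using less e3 by blast
        then show False using s \<open>q \<noteq> 0\<close> by simp
      qed
    qed
  qed
  then show ?thesis using assms by blast
qed

definition homs :: "nat set \<Rightarrow> (nat \<Rightarrow> nat \<Rightarrow> bool) \<Rightarrow> (nat \<times> nat) set \<Rightarrow> (nat \<times> nat) set \<Rightarrow> graph \<Rightarrow> (nat \<Rightarrow> nat) set" where
  "homs V T R D X = {f \<in> V \<rightarrow>\<^sub>E {..<fst X}. \<forall>u\<in>V. \<forall>v\<in>V.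
      (T u v \<longrightarrow> \<not> snd X (f u) (f v)) \<and> ((u,v) \<in> R \<longrightarrow> f u = f v) \<and> ((u,v) \<in> D \<longrightarrow> f u \<noteq> f v)}"

definition hc where "hc V T R D X = card (homs V T R D X)"

lemma finite_homs: "finite V \<Longrightarrow> finite (homs V T R D X)"
  unfolding homs_def by (rule finite_subset[of _ "V \<rightarrow>\<^sub>E {..<fst X}"]) (auto intro: finite_PiE)

lemma zjoin_fst[simp]: "fst (zjoin G H) = fst G + fst H"
  by (simp add: zjoin_def Let_def)
lemma zjoin_snd: "snd (zjoin G H) u v = ((u < fst G \<and> v < fst G \<and> snd G u v)
                 \<or> (fst G \<le> u \<and> fst G \<le> v \<and> u < fst G + fst H \<and> v < fst G + fst H \<and> snd H (u - fst G) (v - fst G))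
                 \<or> (u < fst G \<and> fst G \<le> v \<and> v < fst G + fst H)
                 \<or> (v < fst G \<and> fst G \<le> u \<and> u < fst G + fst H))"
  by (simp add: zjoin_def Let_def)
lemma zprod_fst[simp]: "fst (zprod G H) = fst G * fst H"
  by (simp add: zprod_def Let_def)
lemma zprod_snd: "snd (zprod G H) u v = (u < fst G * fst H \<and> v < fst G * fst H \<and>
   (snd G (u div fst H) (v div fst H) \<or> snd H (u mod fst H) (v mod fst H)))"
  by (simp add: zprod_def Let_def)

lemma graph_iso_sym: "graph_iso X Y \<Longrightarrow> graph_iso Y X"
proof -
  assume "graph_iso X Y"
  then obtain f where n: "fst X = fst Y" and b: "bij_betw f {..<fst X} {..<fst Y}"
    and e: "\<forall>u<fst X. \<forall>v<fst X. snd X u v \<longleftrightarrow> snd Y (f u) (f v)"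
    unfolding graph_iso_def by blast
  let ?g = "inv_into {..<fst X} f"
  have b2: "bij_betw ?g {..<fst Y} {..<fst X}" using b by (rule bij_betw_inv_into)
  have "snd Y u v \<longleftrightarrow> snd X (?g u) (?g v)" if "u < fst Y" "v < fst Y" for u v
  proof -
    have gu: "?g u < fst X" "?g v < fst X" using b2 that by (auto dest: bij_betwE)
    have fu: "f (?g u) = u" "f (?g v) = v" using b that by (auto simp: bij_betw_inv_into_right)
    have "snd X (?g u) (?g v) \<longleftrightarrow> snd Y (f (?g u)) (f (?g v))" using e gu by blast
    then show ?thesis unfolding fu by simp
  qed
  then show ?thesis using n b2 unfolding graph_iso_def by auto
qed

lemma hc_iso_le: assumes "graph_iso X Y" and fin: "finite V" shows "hc V T R D X \<le> hc V T R D Y"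
proof -
  from assms obtain f where n: "fst X = fst Y" and b: "bij_betw f {..<fst X} {..<fst Y}"
    and e: "\<forall>u<fst X. \<forall>v<fst X. snd X u v \<longleftrightarrow> snd Y (f u) (f v)"
    unfolding graph_iso_def by blast
  have inj: "inj_on f {..<fst X}" using b by (simp add: bij_betw_def)
  let ?m = "\<lambda>h. restrict (f \<circ> h) V"
  have "inj_on ?m (homs V T R D X)"
  proof (rule inj_onI)
    fix h1 h2 assume h1: "h1 \<in> homs V T R D X" and h2: "h2 \<in> homs V T R D X" and eq: "?m h1 = ?m h2"
    show "h1 = h2"
    proof (rule extensionalityI[of _ V])
      show "h1 \<in> extensional V" "h2 \<in> extensional V" using h1 h2 by (auto simp: homs_def PiE_def)
      fix x assume x: "x \<in> V"
      have fe: "f (h1 x) = f (h2 x)" using fun_cong[OF eq, of x] x by simp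
      have "h1 x < fst X" "h2 x < fst X" using h1 h2 x by (auto simp: homs_def PiE_def Pi_def)
      then show "h1 x = h2 x" using inj_onD[OF inj fe] by simp
    qed
  qed
  moreover have "?m ` homs V T R D X \<subseteq> homs V T R D Y"
  proof
    fix g assume "g \<in> ?m ` homs V T R D X"
    then obtain h where h: "h \<in> homs V T R D X" and g: "g = ?m h" by blast
    have hv: "\<And>u. u \<in> V \<Longrightarrow> h u < fst X" using h by (auto simp: homs_def)
    have fv: "\<And>u. u \<in> V \<Longrightarrow> f (h u) < fst Y" using hv b by (auto dest: bij_betwE)
    show "g \<in> homs V T R D Y"
      unfolding g homs_def
    proof (rule CollectI, rule conjI, rule_tac [2] ballI, rule_tac [2] ballI)
      show "restrict (f \<circ> h) V \<in> V \<rightarrow>\<^sub>E {..<fst Y}" using fv by (simp add: restrict_PiE_iff)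
      fix u v assume u: "u \<in> V" and v: "v \<in> V"
      have hp: "(T u v \<longrightarrow> \<not> snd X (h u) (h v)) \<and> ((u,v) \<in> R \<longrightarrow> h u = h v) \<and> ((u,v) \<in> D \<longrightarrow> h u \<noteq> h v)"
        using h u v by (auto simp: homs_def)
      show "(T u v \<longrightarrow> \<not> snd Y (restrict (f \<circ> h) V u) (restrict (f \<circ> h) V v)) \<and>
        ((u, v) \<in> R \<longrightarrow> restrict (f \<circ> h) V u = restrict (f \<circ> h) V v) \<and>
        ((u, v) \<in> D \<longrightarrow> restrict (f \<circ> h) V u \<noteq> restrict (f \<circ> h) V v)"
      proof -
        have r: "restrict (f \<circ> h) V u = f (h u)" "restrict (f \<circ> h) V v = f (h v)" using u v by auto
        have i: "f (h u) = f (h v) \<longleftrightarrow> h u = h v" using inj_onD[OF inj, of "h u" "h v"] hv[OF u] hv[OF v] by auto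
        have ee: "snd X (h u) (h v) \<longleftrightarrow> snd Y (f (h u)) (f (h v))" using e hv[OF u] hv[OF v] by blast
        show ?thesis unfolding r using hp i ee by blast
      qed
    qed
  qed
  ultimately show ?thesis unfolding hc_def
    by (rule card_inj_on_le[OF _ _ finite_homs[OF fin]])
qed

lemma hc_iso: "graph_iso X Y \<Longrightarrow> finite V \<Longrightarrow> hc V T R D X = hc V T R D Y"
  using hc_iso_le[of X Y V] hc_iso_le[of Y X V] graph_iso_sym[of X Y] by (simp add: antisym)

lemma homs_iff: "f \<in> homs V T R D X \<longleftrightarrow> f \<in> extensional V \<and> (\<forall>u\<in>V. f u < fst X) \<and> (\<forall>u\<in>V. \<forall>v\<in>V.
      (T u v \<longrightarrow> \<not> snd X (f u) (f v)) \<and> ((u,v) \<in> R \<longrightarrow> f u = f v) \<and> ((u,v) \<in> D \<longrightarrow> f u \<noteq> f v))"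
  unfolding homs_def by (auto simp: PiE_iff)

definition lk :: "nat set \<Rightarrow> (nat \<Rightarrow> nat \<Rightarrow> bool) \<Rightarrow> (nat \<times> nat) set \<Rightarrow> (nat \<times> nat) set" where
  "lk V T R = {(u,v). u \<in> V \<and> v \<in> V \<and> (T u v \<or> T v u \<or> (u,v) \<in> R \<or> (v,u) \<in> R)}"

definition conn where "conn V T R \<longleftrightarrow> (\<exists>v\<in>V. \<forall>u\<in>V. (v,u) \<in> (lk V T R)\<^sup>*)"

lemma join_side:
  assumes f: "f \<in> homs V T R D (zjoin G H)" and p: "(v0,u) \<in> (lk V T R)\<^sup>*" and v0: "v0 \<in> V"
  shows "f u < fst G \<longleftrightarrow> f v0 < fst G"
  using p
proof (induction rule: rtrancl_induct)
  case base then show ?case by simp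
next
  case (step y z)
  from step(2) have yz: "y \<in> V" "z \<in> V" "T y z \<or> T z y \<or> (y,z) \<in> R \<or> (z,y) \<in> R"
    by (auto simp: lk_def)
  have b: "f y < fst G + fst H" "f z < fst G + fst H" using f yz by (auto simp: homs_iff)
  have c: "T y z \<longrightarrow> \<not> snd (zjoin G H) (f y) (f z)" "T z y \<longrightarrow> \<not> snd (zjoin G H) (f z) (f y)"
     "(y,z) \<in> R \<longrightarrow> f y = f z" "(z,y) \<in> R \<longrightarrow> f z = f y"
    using f yz by (auto simp: homs_iff)
  have nj: "\<And>x w. x < fst G + fst H \<Longrightarrow> w < fst G + fst H \<Longrightarrow> \<not> snd (zjoin G H) x w \<Longrightarrow> (x < fst G \<longleftrightarrow> w < fst G)"
    unfolding zjoin_snd by linarith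
  have "f z < fst G \<longleftrightarrow> f y < fst G"
    using yz(3)
  proof (elim disjE)
    assume "T y z" then show ?thesis using c(1) nj b by blast
  next
    assume "T z y" then show ?thesis using c(2) nj b by blast
  next
    assume "(y,z) \<in> R" then show ?thesis using c(3) by simp
  next
    assume "(z,y) \<in> R" then show ?thesis using c(4) by simp
  qed
  then show ?case using step(3) by simp
qed

lemma zj_lo: "x < fst G \<Longrightarrow> y < fst G \<Longrightarrow> snd (zjoin G H) x y = snd G x y"
  unfolding zjoin_snd by auto
lemma zj_hi: "x < fst H \<Longrightarrow> y < fst H \<Longrightarrow> snd (zjoin G H) (x + fst G) (y + fst G) = snd H x y"
  unfolding zjoin_snd by auto

lemma hc_join:
  assumes fin: "finite V" and cn: "conn V T R"
  shows "hc V T R D (zjoin G H) = hc V T R D G + hc V T R D H"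
proof -
  define n where "n = fst G"
  obtain v0 where v0: "v0 \<in> V" and reach: "\<And>u. u \<in> V \<Longrightarrow> (v0,u) \<in> (lk V T R)\<^sup>*"
    using cn unfolding conn_def by blast
  let ?sh = "\<lambda>h. restrict (\<lambda>u. h u + n) V"
  have inj: "inj_on ?sh (homs V T R D H)"
  proof (rule inj_onI)
    fix h1 h2 assume h1: "h1 \<in> homs V T R D H" and h2: "h2 \<in> homs V T R D H" and eq: "?sh h1 = ?sh h2"
    show "h1 = h2"
    proof (rule extensionalityI[of _ V])
      show "h1 \<in> extensional V" "h2 \<in> extensional V" using h1 h2 by (auto simp: homs_iff)
      fix x assume x: "x \<in> V"
      show "h1 x = h2 x" using fun_cong[OF eq, of x] x by simp
    qed
  qed
  have s1: "homs V T R D G \<subseteq> homs V T R D (zjoin G H)"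
  proof
    fix f assume f: "f \<in> homs V T R D G"
    then have b: "\<forall>u\<in>V. f u < fst G" by (simp add: homs_iff)
    show "f \<in> homs V T R D (zjoin G H)" using f b unfolding homs_iff
      by (auto simp: zj_lo)
  qed
  have s2: "?sh ` homs V T R D H \<subseteq> homs V T R D (zjoin G H)"
  proof
    fix f assume "f \<in> ?sh ` homs V T R D H"
    then obtain h where h: "h \<in> homs V T R D H" and fh: "f = ?sh h" by blast
    have b: "\<forall>u\<in>V. h u < fst H" using h by (simp add: homs_iff)
    show "f \<in> homs V T R D (zjoin G H)" using h b unfolding fh homs_iff n_def
      by (auto simp: zj_hi)
  qed
  have s3: "homs V T R D (zjoin G H) \<subseteq> homs V T R D G \<union> ?sh ` homs V T R D H"
  proof
    fix f assume f: "f \<in> homs V T R D (zjoin G H)"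
    have sd: "\<And>u. u \<in> V \<Longrightarrow> f u < n \<longleftrightarrow> f v0 < n"
      using join_side[OF f reach v0] n_def by blast
    show "f \<in> homs V T R D G \<union> ?sh ` homs V T R D H"
    proof (cases "f v0 < n")
      case True
      then have "\<forall>u\<in>V. f u < n" using sd by blast
      then have "f \<in> homs V T R D G" using f unfolding homs_iff n_def
        by (auto simp: zj_lo)
      then show ?thesis by blast
    next
      case False
      then have ge: "\<forall>u\<in>V. n \<le> f u" using sd by (meson not_less)
      define h where "h = restrict (\<lambda>u. f u - n) V"
      have "h \<in> homs V T R D H"
      proof -
        have fe: "f \<in> extensional V" and fb: "\<forall>u\<in>V. f u < n + fst H"
          and fc: "\<forall>u\<in>V. \<forall>v\<in>V. (T u v \<longrightarrow> \<not> snd (zjoin G H) (f u) (f v)) \<and> ((u,v) \<in> R \<longrightarrow> f u = f v) \<and> ((u,v) \<in> D \<longrightarrow> f u \<noteq> f v)"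
          using f unfolding homs_iff n_def by auto
        show ?thesis unfolding homs_iff h_def
        proof (rule conjI, simp, rule conjI, rule ballI, rule_tac [2] ballI, rule_tac [2] ballI)
          fix u assume u: "u \<in> V"
          have "f u < n + fst H" "n \<le> f u" using fb ge u by auto
          then show "restrict (\<lambda>u. f u - n) V u < fst H" using u by simp
        next
          fix u v assume u: "u \<in> V" and v: "v \<in> V"
          have "T u v \<longrightarrow> \<not> snd (zjoin G H) (f u) (f v)" "(u,v) \<in> R \<longrightarrow> f u = f v" "(u,v) \<in> D \<longrightarrow> f u \<noteq> f v"
            using fc u v by auto
          then show "(T u v \<longrightarrow> \<not> snd H (restrict (\<lambda>u. f u - n) V u) (restrict (\<lambda>u. f u - n) V v)) \<and>
            ((u, v) \<in> R \<longrightarrow> restrict (\<lambda>u. f u - n) V u = restrict (\<lambda>u. f u - n) V v) \<and>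
            ((u, v) \<in> D \<longrightarrow> restrict (\<lambda>u. f u - n) V u \<noteq> restrict (\<lambda>u. f u - n) V v)"
          proof -
            have r: "restrict (\<lambda>u. f u - n) V u = f u - n" "restrict (\<lambda>u. f u - n) V v = f v - n" using u v by auto
            have b0: "f u < n + fst H" "n \<le> f u" "f v < n + fst H" "n \<le> f v" using fb ge u v by auto
            have bb: "f u - n < fst H" "f v - n < fst H" "f u - n + n = f u" "f v - n + n = f v" using b0 by arith+
            have ej: "snd (zjoin G H) (f u) (f v) = snd H (f u - n) (f v - n)"
              using zj_hi[of "f u - n" H "f v - n" G] bb by (simp add: n_def)
            have ee: "f u - n = f v - n \<longleftrightarrow> f u = f v" using bb by linarith
            show ?thesis unfolding r using ej ee \<open>T u v \<longrightarrow> \<not> snd (zjoin G H) (f u) (f v)\<close>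
              \<open>(u,v) \<in> R \<longrightarrow> f u = f v\<close> \<open>(u,v) \<in> D \<longrightarrow> f u \<noteq> f v\<close> by simp
          qed
        qed
      qed
      moreover have "?sh h = f"
      proof (rule extensionalityI[of _ V])
        show "?sh h \<in> extensional V" by simp
        show "f \<in> extensional V" using f by (simp add: homs_iff)
        fix x assume "x \<in> V" then show "?sh h x = f x" using ge by (simp add: h_def)
      qed
      ultimately show ?thesis by blast
    qed
  qed
  have eq: "homs V T R D (zjoin G H) = homs V T R D G \<union> ?sh ` homs V T R D H"
    using s1 s2 s3 by blast
  have dj: "homs V T R D G \<inter> ?sh ` homs V T R D H = {}"
  proof -
    { fix f assume a: "f \<in> homs V T R D G" and b: "f \<in> ?sh ` homs V T R D H"
      have "f v0 < n" using a v0 by (auto simp: homs_iff n_def)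
      moreover have "f v0 \<ge> n" using b v0 by auto
      ultimately have False by simp }
    then show ?thesis by blast
  qed
  have "hc V T R D (zjoin G H) = card (homs V T R D G) + card (?sh ` homs V T R D H)"
    unfolding hc_def eq using dj by (intro card_Un_disjoint finite_homs finite_imageI fin)
  also have "\<dots> = hc V T R D G + hc V T R D H"
    unfolding hc_def using card_image[OF inj] by simp
  finally show ?thesis .
qed

lemma zp_e: "x < fst G * fst H \<Longrightarrow> y < fst G * fst H \<Longrightarrow> snd (zprod G H) x y =
   (snd G (x div fst H) (y div fst H) \<or> snd H (x mod fst H) (y mod fst H))"
  unfolding zprod_snd by simp

lemma dm_facts: fixes a b n m :: nat assumes "a < n" "b < m"
  shows "(a*m+b) div m = a" "(a*m+b) mod m = b" "a*m+b < n*m"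
proof -
  have m: "0 < m" using assms by simp
  show "(a*m+b) div m = a" using m assms by simp
  show "(a*m+b) mod m = b" using m assms by simp
  have "a*m+b < a*m + m" using assms by simp
  also have "\<dots> = (a+1)*m" by simp
  also have "\<dots> \<le> n*m" using assms by (intro mult_right_mono) auto
  finally show "a*m+b < n*m" .
qed

lemma dm_facts2: fixes x n m :: nat assumes "x < n*m"
  shows "x div m < n" "x mod m < m" "x div m * m + x mod m = x"
proof -
  have m: "0 < m" using assms by (cases m) auto
  show "x div m < n" using assms by (simp add: less_mult_imp_div_less)
  show "x mod m < m" using m by simp
  show "x div m * m + x mod m = x" by simp
qed

lemma hc_prod:
  assumes fin: "finite V"
  shows "hc V T R {} (zprod G H) = hc V T R {} G * hc V T R {} H"
proof -
  define m where "m = fst H"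
  define n where "n = fst G"
  define comb where "comb = (\<lambda>(g::nat\<Rightarrow>nat,h::nat\<Rightarrow>nat). restrict (\<lambda>u. g u * m + h u) V)"
  have inj: "inj_on comb (homs V T R {} G \<times> homs V T R {} H)"
  proof (rule inj_onI)
    fix p q assume p: "p \<in> homs V T R {} G \<times> homs V T R {} H" and q: "q \<in> homs V T R {} G \<times> homs V T R {} H"
      and eq0: "comb p = comb q"
    obtain g h where pp: "p = (g,h)" by (cases p)
    obtain g' h' where qq: "q = (g',h')" by (cases q)
    have g: "g \<in> homs V T R {} G" and h: "h \<in> homs V T R {} H"
      and g': "g' \<in> homs V T R {} G" and h': "h' \<in> homs V T R {} H" using p q pp qq by auto
    have eq: "comb (g,h) = comb (g',h')" using eq0 pp qq by simp
    have pt: "g u = g' u \<and> h u = h' u" if u: "u \<in> V" for u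
    proof -
      have "g u < n" "h u < m" "g' u < n" "h' u < m" using g h g' h' u by (auto simp: homs_iff n_def m_def)
      moreover have "g u * m + h u = g' u * m + h' u" using fun_cong[OF eq, of u] u by (simp add: comb_def)
      ultimately show ?thesis using dm_facts by metis
    qed
    have "g = g'"
      by (rule extensionalityI[of _ V]) (use g g' pt in \<open>auto simp: homs_iff\<close>)
    moreover have "h = h'"
      by (rule extensionalityI[of _ V]) (use h h' pt in \<open>auto simp: homs_iff\<close>)
    ultimately show "p = q" using pp qq by simp
  qed
  have eq: "homs V T R {} (zprod G H) = comb ` (homs V T R {} G \<times> homs V T R {} H)"
  proof (rule set_eqI, rule iffI)
    fix f assume f: "f \<in> homs V T R {} (zprod G H)"
    have fb: "\<And>u. u \<in> V \<Longrightarrow> f u < n * m" using f by (auto simp: homs_iff n_def m_def)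
    have fb': "\<And>u. u \<in> V \<Longrightarrow> f u < fst G * fst H" using fb by (simp add: n_def m_def)
    have fc: "\<And>u v. u \<in> V \<Longrightarrow> v \<in> V \<Longrightarrow> (T u v \<longrightarrow> \<not> snd (zprod G H) (f u) (f v)) \<and> ((u,v) \<in> R \<longrightarrow> f u = f v)"
      using f by (auto simp: homs_iff)
    define g where "g = restrict (\<lambda>u. f u div m) V"
    define h where "h = restrict (\<lambda>u. f u mod m) V"
    have "g \<in> homs V T R {} G" unfolding homs_iff
    proof (rule conjI, simp add: g_def, rule conjI, rule ballI, rule_tac [2] ballI, rule_tac [2] ballI)
      fix u assume u: "u \<in> V" show "g u < fst G" using dm_facts2(1)[OF fb[OF u]] u by (simp add: g_def n_def)
    next
      fix u v assume u: "u \<in> V" and v: "v \<in> V"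
      show "(T u v \<longrightarrow> \<not> snd G (g u) (g v)) \<and> ((u, v) \<in> R \<longrightarrow> g u = g v) \<and> ((u, v) \<in> {} \<longrightarrow> g u \<noteq> g v)"
        using fc[OF u v] zp_e[OF fb'[OF u] fb'[OF v]] u v
        by (auto simp: g_def m_def)
    qed
    moreover have "h \<in> homs V T R {} H" unfolding homs_iff
    proof (rule conjI, simp add: h_def, rule conjI, rule ballI, rule_tac [2] ballI, rule_tac [2] ballI)
      fix u assume u: "u \<in> V" show "h u < fst H" using dm_facts2(2)[OF fb[OF u]] u by (simp add: h_def m_def)
    next
      fix u v assume u: "u \<in> V" and v: "v \<in> V"
      show "(T u v \<longrightarrow> \<not> snd H (h u) (h v)) \<and> ((u, v) \<in> R \<longrightarrow> h u = h v) \<and> ((u, v) \<in> {} \<longrightarrow> h u \<noteq> h v)"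
        using fc[OF u v] zp_e[OF fb'[OF u] fb'[OF v]] u v
        by (auto simp: h_def m_def)
    qed
    moreover have "comb (g,h) = f"
    proof (rule extensionalityI[of _ V])
      show "comb (g,h) \<in> extensional V" by (simp add: comb_def)
      show "f \<in> extensional V" using f by (simp add: homs_iff)
      fix u assume u: "u \<in> V" then show "comb (g,h) u = f u"
        using dm_facts2(3)[OF fb[OF u]] by (simp add: comb_def g_def h_def)
    qed
    ultimately show "f \<in> comb ` (homs V T R {} G \<times> homs V T R {} H)" by force
  next
    fix f assume "f \<in> comb ` (homs V T R {} G \<times> homs V T R {} H)"
    then obtain g h where g: "g \<in> homs V T R {} G" and h: "h \<in> homs V T R {} H" and fd: "f = comb (g,h)" by blast
    have gb: "\<And>u. u \<in> V \<Longrightarrow> g u < n" and hb: "\<And>u. u \<in> V \<Longrightarrow> h u < m"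
      using g h by (auto simp: homs_iff n_def m_def)
    have fu: "\<And>u. u \<in> V \<Longrightarrow> f u = g u * m + h u" by (simp add: fd comb_def)
    show "f \<in> homs V T R {} (zprod G H)" unfolding homs_iff
    proof (rule conjI, simp add: fd comb_def, rule conjI, rule ballI, rule_tac [2] ballI, rule_tac [2] ballI)
      fix u assume u: "u \<in> V" show "f u < fst (zprod G H)"
        using dm_facts(3)[OF gb[OF u] hb[OF u]] fu[OF u] by (simp add: n_def m_def)
    next
      fix u v assume u: "u \<in> V" and v: "v \<in> V"
      have d: "f u div m = g u" "f u mod m = h u" "f v div m = g v" "f v mod m = h v"
        using dm_facts(1,2)[OF gb[OF u] hb[OF u]] dm_facts(1,2)[OF gb[OF v] hb[OF v]] fu[OF u] fu[OF v] by auto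
      have bd: "f u < fst G * fst H" "f v < fst G * fst H"
        using dm_facts(3)[OF gb[OF u] hb[OF u]] dm_facts(3)[OF gb[OF v] hb[OF v]] fu[OF u] fu[OF v] by (auto simp: n_def m_def)
      have e: "snd (zprod G H) (f u) (f v) = (snd G (g u) (g v) \<or> snd H (h u) (h v))"
        using zp_e[OF bd] d by (simp add: m_def)
      have c: "(T u v \<longrightarrow> \<not> snd G (g u) (g v)) \<and> ((u,v) \<in> R \<longrightarrow> g u = g v)"
              "(T u v \<longrightarrow> \<not> snd H (h u) (h v)) \<and> ((u,v) \<in> R \<longrightarrow> h u = h v)"
        using g h u v by (auto simp: homs_iff)
      show "(T u v \<longrightarrow> \<not> snd (zprod G H) (f u) (f v)) \<and> ((u, v) \<in> R \<longrightarrow> f u = f v) \<and> ((u, v) \<in> {} \<longrightarrow> f u \<noteq> f v)"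
        using e c fu[OF u] fu[OF v] by auto
    qed
  qed
  show ?thesis unfolding hc_def eq card_image[OF inj]
    by (simp add: card_cartesian_product)
qed

lemma hc_empty: "V \<noteq> {} \<Longrightarrow> hc V T R D graph_empty = 0"
  by (auto simp: hc_def homs_def graph_empty_def PiE_eq_empty_iff)

lemma hc_K1: "V \<noteq> {} \<Longrightarrow> hc V T R {} graph_K1 = 1"
proof -
  assume V: "V \<noteq> {}"
  have "homs V T R {} graph_K1 = {restrict (\<lambda>_. 0) V}"
  proof (rule set_eqI, rule iffI)
    fix f assume f: "f \<in> homs V T R {} graph_K1"
    show "f \<in> {restrict (\<lambda>_. 0) V}"
    proof -
      have "f = restrict (\<lambda>_. 0) V"
        by (rule extensionalityI[of _ V]) (use f in \<open>auto simp: homs_iff graph_K1_def\<close>)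
      then show ?thesis by simp
    qed
  qed (auto simp: homs_iff graph_K1_def)
  then show ?thesis by (simp add: hc_def)
qed

definition phi :: "nat set \<Rightarrow> (nat \<Rightarrow> nat \<Rightarrow> bool) \<Rightarrow> (nat \<times> nat) set \<Rightarrow> zring \<Rightarrow> int" where
  "phi V T R x = int (hc V T R {} (fst x)) - int (hc V T R {} (snd x))"

lemma phi_eq:
  assumes fin: "finite V" and cn: "conn V T R" and e: "zr_eq x y"
  shows "phi V T R x = phi V T R y"
proof -
  obtain K where "graph_iso (zjoin (zjoin (fst x) (snd y)) K) (zjoin (zjoin (fst y) (snd x)) K)"
    using e unfolding zr_eq_def by blast
  then have "hc V T R {} (zjoin (zjoin (fst x) (snd y)) K) = hc V T R {} (zjoin (zjoin (fst y) (snd x)) K)"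
    using hc_iso fin by blast
  then have "hc V T R {} (fst x) + hc V T R {} (snd y) + hc V T R {} K = hc V T R {} (fst y) + hc V T R {} (snd x) + hc V T R {} K"
    by (simp add: hc_join[OF fin cn])
  then show ?thesis unfolding phi_def by linarith
qed

lemma phi_mul:
  assumes fin: "finite V" and cn: "conn V T R"
  shows "phi V T R (zr_mul x y) = phi V T R x * phi V T R y"
  unfolding phi_def zr_mul_def by (simp add: hc_join[OF fin cn] hc_prod[OF fin] algebra_simps)

lemma phi_one: "finite V \<Longrightarrow> V \<noteq> {} \<Longrightarrow> phi V T R zr_one = 1"
  unfolding phi_def zr_one_def by (simp add: hc_K1 hc_empty)

lemma phi_K2: "finite V \<Longrightarrow> V \<noteq> {} \<Longrightarrow> conn V T R \<Longrightarrow> phi V T R zr_K2 = 2"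
  unfolding phi_def zr_K2_def by (simp add: hc_K1 hc_empty hc_join)

lemma hc_emptyV: "hc {} T R D X = 1"
  by (simp add: hc_def homs_def)

lemma hc_split:
  assumes fin: "finite V" and C: "C \<subseteq> V"
    and cl: "\<And>u w. u \<in> C \<Longrightarrow> w \<in> V - C \<Longrightarrow> \<not> T u w \<and> \<not> T w u \<and> (u,w) \<notin> R \<and> (w,u) \<notin> R"
  shows "hc V T R {} X = hc C T R {} X * hc (V - C) T R {} X"
proof -
  define mg where "mg = (\<lambda>(g::nat\<Rightarrow>nat,h::nat\<Rightarrow>nat). restrict (\<lambda>u. if u \<in> C then g u else h u) V)"
  have finC: "finite C" "finite (V - C)" using fin C finite_subset by auto
  have inj: "inj_on mg (homs C T R {} X \<times> homs (V - C) T R {} X)"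
  proof (rule inj_onI)
    fix p q assume p: "p \<in> homs C T R {} X \<times> homs (V - C) T R {} X" and q: "q \<in> homs C T R {} X \<times> homs (V - C) T R {} X"
      and eq0: "mg p = mg q"
    obtain g h where pp: "p = (g,h)" by (cases p)
    obtain g' h' where qq: "q = (g',h')" by (cases q)
    have g: "g \<in> homs C T R {} X" and h: "h \<in> homs (V - C) T R {} X"
      and g': "g' \<in> homs C T R {} X" and h': "h' \<in> homs (V - C) T R {} X" using p q pp qq by auto
    have eq: "\<And>u. u \<in> V \<Longrightarrow> (if u \<in> C then g u else h u) = (if u \<in> C then g' u else h' u)"
    proof -
      fix u assume u: "u \<in> V"
      have "mg (g,h) u = mg (g',h') u" using eq0 pp qq by simp
      then show "(if u \<in> C then g u else h u) = (if u \<in> C then g' u else h' u)" using u by (simp add: mg_def)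
    qed
    have "g = g'"
    proof (rule extensionalityI[of _ C])
      show "g \<in> extensional C" "g' \<in> extensional C" using g g' by (auto simp: homs_iff)
      fix u assume u: "u \<in> C" then have "u \<in> V" using C by blast
      then show "g u = g' u" using eq[of u] u by simp
    qed
    moreover have "h = h'"
    proof (rule extensionalityI[of _ "V - C"])
      show "h \<in> extensional (V - C)" "h' \<in> extensional (V - C)" using h h' by (auto simp: homs_iff)
      fix u assume "u \<in> V - C" then show "h u = h' u" using eq[of u] by auto
    qed
    ultimately show "p = q" using pp qq by simp
  qed
  have eq: "homs V T R {} X = mg ` (homs C T R {} X \<times> homs (V - C) T R {} X)"
  proof (rule set_eqI, rule iffI)
    fix f assume f: "f \<in> homs V T R {} X"
    have "restrict f C \<in> homs C T R {} X" using f C unfolding homs_iff by auto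
    moreover have "restrict f (V - C) \<in> homs (V - C) T R {} X" using f unfolding homs_iff by auto
    moreover have "mg (restrict f C, restrict f (V - C)) = f"
      by (rule extensionalityI[of _ V]) (use f in \<open>auto simp: mg_def homs_iff\<close>)
    ultimately show "f \<in> mg ` (homs C T R {} X \<times> homs (V - C) T R {} X)" by force
  next
    fix f assume "f \<in> mg ` (homs C T R {} X \<times> homs (V - C) T R {} X)"
    then obtain g h where g: "g \<in> homs C T R {} X" and h: "h \<in> homs (V - C) T R {} X" and fd: "f = mg (g,h)" by blast
    have fv: "\<And>u. u \<in> V \<Longrightarrow> f u = (if u \<in> C then g u else h u)" by (simp add: fd mg_def)
    show "f \<in> homs V T R {} X" unfolding homs_iff
    proof (rule conjI, simp add: fd mg_def, rule conjI, rule ballI, rule_tac [2] ballI, rule_tac [2] ballI)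
      fix u assume u: "u \<in> V" show "f u < fst X" using g h u fv[OF u] by (auto simp: homs_iff)
    next
      fix u v assume u: "u \<in> V" and v: "v \<in> V"
      show "(T u v \<longrightarrow> \<not> snd X (f u) (f v)) \<and> ((u, v) \<in> R \<longrightarrow> f u = f v) \<and> ((u, v) \<in> {} \<longrightarrow> f u \<noteq> f v)"
      proof (cases "u \<in> C"; cases "v \<in> C")
        assume "u \<in> C" "v \<in> C" then show ?thesis using g fv u v by (auto simp: homs_iff)
      next
        assume "u \<notin> C" "v \<notin> C" then show ?thesis using h fv u v by (auto simp: homs_iff)
      next
        assume "u \<in> C" "v \<notin> C" then show ?thesis using cl[of u v] v by auto
      next
        assume "u \<notin> C" "v \<in> C" then show ?thesis using cl[of v u] u by auto
      qed
    qed
  qed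
  show ?thesis unfolding hc_def eq card_image[OF inj]
    by (simp add: card_cartesian_product)
qed

lemma all_patterns:
  assumes conn_case: "\<And>V T R. finite V \<Longrightarrow> V \<noteq> {} \<Longrightarrow> conn V T R \<Longrightarrow> hc V T R {} X = hc V T R {} Y"
  shows "finite V \<Longrightarrow> hc V T R {} X = hc V T R {} Y"
proof (induction "card V" arbitrary: V rule: less_induct)
  case less
  show ?case
  proof (cases "V = {}")
    case True then show ?thesis by (simp add: hc_emptyV)
  next
    case False
    then obtain v where v: "v \<in> V" by blast
    define C where "C = {u \<in> V. (v,u) \<in> (lk V T R)\<^sup>*}"
    have CV: "C \<subseteq> V" by (auto simp: C_def)
    have vC: "v \<in> C" using v by (simp add: C_def)
    have cl: "\<not> T u w \<and> \<not> T w u \<and> (u,w) \<notin> R \<and> (w,u) \<notin> R" if "u \<in> C" "w \<in> V - C" for u w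
    proof -
      have "(u,w) \<notin> lk V T R"
      proof
        assume "(u,w) \<in> lk V T R"
        then have "(v,w) \<in> (lk V T R)\<^sup>*" using that(1) by (auto simp: C_def intro: rtrancl_into_rtrancl)
        then show False using that by (auto simp: C_def)
      qed
      then show ?thesis using that CV by (auto simp: lk_def)
    qed
    show ?thesis
    proof (cases "C = V")
      case True
      then have "conn V T R" unfolding conn_def using v by (auto simp: C_def)
      then show ?thesis using conn_case less.prems False by blast
    next
      case ne: False
      have f1: "finite C" "finite (V - C)" using less.prems CV finite_subset by auto
      have c1: "card C < card V" using CV ne less.prems by (simp add: psubset_card_mono psubsetI)
      have "V - C \<subset> V" using vC CV by blast
      then have c2: "card (V - C) < card V" using less.prems by (rule psubset_card_mono[rotated])
      have "hc V T R {} X = hc C T R {} X * hc (V - C) T R {} X" by (rule hc_split[OF less.prems CV cl])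
      also have "\<dots> = hc C T R {} Y * hc (V - C) T R {} Y" using less.hyps c1 c2 f1 by simp
      also have "\<dots> = hc V T R {} Y" by (rule hc_split[OF less.prems CV cl, symmetric])
      finally show ?thesis .
    qed
  qed
qed

lemma homs_insD:
  assumes "a \<in> V" "b \<in> V"
  shows "homs V T R (insert (a,b) D) X = homs V T R D X - homs V T (insert (a,b) R) D X"
  using assms unfolding homs_iff by (auto simp: homs_iff)

lemma homs_insD':
  assumes "\<not> (a \<in> V \<and> b \<in> V)"
  shows "homs V T R (insert (a,b) D) X = homs V T R D X"
  using assms unfolding homs_def by auto

lemma all_D:
  assumes base: "\<And>R. hc V T R {} X = hc V T R {} Y" and fin: "finite V" and fD: "finite D"
  shows "hc V T R D X = hc V T R D Y"
  using fD
proof (induction D arbitrary: R rule: finite_induct)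
  case empty then show ?case using base by simp
next
  case (insert p D)
  obtain a b where p: "p = (a,b)" by (cases p)
  show ?case
  proof (cases "a \<in> V \<and> b \<in> V")
    case True
    have sub: "\<And>Z. homs V T (insert (a,b) R) D Z \<subseteq> homs V T R D Z" by (auto simp: homs_def)
    have "\<And>Z. hc V T R (insert p D) Z = hc V T R D Z - hc V T (insert (a,b) R) D Z"
      unfolding hc_def p using True by (simp add: homs_insD card_Diff_subset[OF finite_homs[OF fin] sub])
    then show ?thesis using insert.IH by simp
  next
    case False
    then show ?thesis using insert.IH by (simp add: hc_def p homs_insD')
  qed
qed

lemma embed:
  assumes H: "\<And>V T R D. finite V \<Longrightarrow> finite D \<Longrightarrow> hc V T R D Q = hc V T R D M"
  shows "\<exists>f. inj_on f {..<fst Q} \<and> f ` {..<fst Q} \<subseteq> {..<fst M} \<and>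
           (\<forall>u<fst Q. \<forall>v<fst Q. snd M (f u) (f v) \<longrightarrow> snd Q u v)"
proof -
  define V where "V = {..<fst Q}"
  define T where "T = (\<lambda>u v. \<not> snd Q u v)"
  define D where "D = {(u,v). u \<in> V \<and> v \<in> V \<and> u \<noteq> v}"
  have fD: "finite D" unfolding D_def by (rule finite_subset[of _ "V \<times> V"]) (auto simp: V_def)
  have "restrict id V \<in> homs V T {} D Q" by (auto simp: homs_iff V_def T_def D_def)
  then have "hc V T {} D Q \<noteq> 0" unfolding hc_def using finite_homs[of V] by (auto simp: V_def)
  then have "hc V T {} D M \<noteq> 0" using H[of V D] fD by (simp add: V_def)
  then obtain f where f: "f \<in> homs V T {} D M" unfolding hc_def by (metis card.empty ex_in_conv)
  have i: "inj_on f V"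
  proof (rule inj_onI)
    fix x y assume "x \<in> V" "y \<in> V" "f x = f y" then show "x = y" using f by (auto simp: homs_iff D_def)
  qed
  show ?thesis
    using f i by (intro exI[of _ f]) (auto simp: homs_iff V_def T_def)
qed

lemma edge_count:
  fixes q :: nat and f :: "nat \<Rightarrow> nat"
  assumes i: "inj_on f {..<q}" and s: "f ` {..<q} = {..<q}"
    and e: "\<forall>u<q. \<forall>v<q. M (f u) (f v) \<longrightarrow> Q u v"
  shows "card {(u,v). u < q \<and> v < q \<and> M u v} \<le> card {(u,v). u < q \<and> v < q \<and> Q u v}"
    and "card {(u,v). u < q \<and> v < q \<and> M u v} = card {(u,v). u < q \<and> v < q \<and> Q u v} \<Longrightarrow>
         \<forall>u<q. \<forall>v<q. Q u v \<longleftrightarrow> M (f u) (f v)"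
proof -
  define E' where "E' = {(u,v). u < q \<and> v < q \<and> M (f u) (f v)}"
  define EQ where "EQ = {(u,v). u < q \<and> v < q \<and> Q u v}"
  define EM where "EM = {(u,v). u < q \<and> v < q \<and> M u v}"
  have s1: "EQ \<subseteq> {..<q} \<times> {..<q}" and s2: "E' \<subseteq> {..<q} \<times> {..<q}" by (auto simp: EQ_def E'_def)
  have fin: "finite EQ" "finite E'"
  proof -
    have ff: "finite ({..<q} \<times> {..<q})" by (intro finite_SigmaI finite_lessThan)
    show "finite EQ" by (rule finite_subset[OF s1 ff])
    show "finite E'" by (rule finite_subset[OF s2 ff])
  qed
  have sub: "E' \<subseteq> EQ" using e by (auto simp: E'_def EQ_def)
  let ?p = "\<lambda>(u,v). (f u, f v)"
  have ip: "inj_on ?p E'"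
  proof (rule inj_onI)
    fix x y assume x: "x \<in> E'" and y: "y \<in> E'" and xy: "?p x = ?p y"
    obtain a b c d where ab: "x = (a,b)" and cd: "y = (c,d)" by (cases x, cases y)
    have r: "a < q" "b < q" "c < q" "d < q" using x y ab cd by (auto simp: E'_def)
    have "f a = f c" "f b = f d" using xy ab cd by auto
    then have "a = c" "b = d" using inj_onD[OF i] r by auto
    then show "x = y" using ab cd by simp
  qed
  have im: "?p ` E' = EM"
  proof
    show "?p ` E' \<subseteq> EM" using s by (auto simp: E'_def EM_def)
    show "EM \<subseteq> ?p ` E'"
    proof
      fix x assume "x \<in> EM"
      then obtain a b where x: "x = (a,b)" "a < q" "b < q" "M a b" by (auto simp: EM_def)
      have "a \<in> f ` {..<q}" "b \<in> f ` {..<q}" using s x by auto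
      then obtain u v where u: "u < q" "f u = a" and v: "v < q" "f v = b" by force
      have "(u,v) \<in> E'" using u v x by (auto simp: E'_def)
      moreover have "x = ?p (u,v)" using u v x by simp
      ultimately show "x \<in> ?p ` E'" by blast
    qed
  qed
  have cM: "card EM = card E'" using card_image[OF ip] im by simp
  show "card EM \<le> card EQ" unfolding cM by (rule card_mono[OF fin(1) sub])
  { assume "card EM = card EQ"
    then have "E' = EQ" using card_subset_eq[OF fin(1) sub] cM by simp
    then show "\<forall>u<q. \<forall>v<q. Q u v \<longleftrightarrow> M (f u) (f v)"
    proof (intro allI impI)
      fix u v assume "u < q" "v < q"
      then have "Q u v \<longleftrightarrow> (u,v) \<in> EQ" "M (f u) (f v) \<longleftrightarrow> (u,v) \<in> E'" by (simp_all add: EQ_def E'_def)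
      then show "Q u v \<longleftrightarrow> M (f u) (f v)" using \<open>E' = EQ\<close> by simp
    qed }
qed

lemma iso_from_counts:
  assumes H: "\<And>V T R D. finite V \<Longrightarrow> finite D \<Longrightarrow> hc V T R D Q = hc V T R D M"
  shows "graph_iso Q M"
proof -
  obtain f where f1: "inj_on f {..<fst Q}" and f2: "f ` {..<fst Q} \<subseteq> {..<fst M}"
    and f3: "\<forall>u<fst Q. \<forall>v<fst Q. snd M (f u) (f v) \<longrightarrow> snd Q u v"
    using embed[OF H] by blast
  obtain g where g1: "inj_on g {..<fst M}" and g2: "g ` {..<fst M} \<subseteq> {..<fst Q}"
    and g3: "\<forall>u<fst M. \<forall>v<fst M. snd Q (g u) (g v) \<longrightarrow> snd M u v"
  proof -
    have H': "\<And>V T R D. finite V \<Longrightarrow> finite D \<Longrightarrow> hc V T R D M = hc V T R D Q" using H by simp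
    show ?thesis using embed[OF H'] that by blast
  qed
  have "fst Q \<le> fst M" using card_inj_on_le[OF f1 f2] by simp
  moreover have "fst M \<le> fst Q" using card_inj_on_le[OF g1 g2] by simp
  ultimately have n: "fst M = fst Q" by simp
  define q where "q = fst Q"
  have f1': "inj_on f {..<q}" using f1 by (simp add: q_def)
  have g1': "inj_on g {..<q}" using g1 n by (simp add: q_def)
  have f2': "f ` {..<q} \<subseteq> {..<q}" using f2 n by (simp add: q_def)
  have g2': "g ` {..<q} \<subseteq> {..<q}" using g2 n by (simp add: q_def)
  have fs: "f ` {..<q} = {..<q}" by (rule endo_inj_surj[OF _ f2' f1']) simp
  have gs: "g ` {..<q} = {..<q}" by (rule endo_inj_surj[OF _ g2' g1']) simp
  have f3': "\<forall>u<q. \<forall>v<q. snd M (f u) (f v) \<longrightarrow> snd Q u v" using f3 by (simp add: q_def)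
  have g3': "\<forall>u<q. \<forall>v<q. snd Q (g u) (g v) \<longrightarrow> snd M u v" using g3 n by (simp add: q_def)
  have c1: "card {(u,v). u < q \<and> v < q \<and> snd M u v} \<le> card {(u,v). u < q \<and> v < q \<and> snd Q u v}"
    by (rule edge_count(1)[OF f1' fs f3'])
  have c2: "card {(u,v). u < q \<and> v < q \<and> snd Q u v} \<le> card {(u,v). u < q \<and> v < q \<and> snd M u v}"
    by (rule edge_count(1)[OF g1' gs g3'])
  have E: "\<forall>u<q. \<forall>v<q. snd Q u v \<longleftrightarrow> snd M (f u) (f v)"
    by (rule edge_count(2)[OF f1' fs f3']) (use c1 c2 in linarith)
  have B: "bij_betw f {..<q} {..<q}" using f1' fs by (simp add: bij_betw_def)
  show ?thesis unfolding graph_iso_def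
    by (intro conjI exI[of _ f]) (use E B n in \<open>simp_all add: q_def\<close>)
qed

lemma iso_zero: assumes "graph_iso X Y"
  shows "graph_iso (zjoin (zjoin X graph_empty) graph_empty) (zjoin (zjoin graph_empty Y) graph_empty)"
proof -
  obtain f where n: "fst X = fst Y" and b: "bij_betw f {..<fst X} {..<fst Y}"
    and e: "\<forall>u<fst X. \<forall>v<fst X. snd X u v \<longleftrightarrow> snd Y (f u) (f v)"
    using assms unfolding graph_iso_def by blast
  have l: "\<And>u v. u < fst X \<Longrightarrow> v < fst X \<Longrightarrow> snd (zjoin (zjoin X graph_empty) graph_empty) u v = snd X u v"
    by (simp add: zj_lo graph_empty_def)
  have r: "\<And>u v. u < fst Y \<Longrightarrow> v < fst Y \<Longrightarrow> snd (zjoin (zjoin graph_empty Y) graph_empty) u v = snd Y u v"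
    using zj_hi[of _ Y _ graph_empty] by (simp add: zj_lo graph_empty_def)
  have fb: "\<And>u. u < fst X \<Longrightarrow> f u < fst Y" using b by (auto dest: bij_betwE)
  have n2: "fst (zjoin (zjoin X graph_empty) graph_empty) = fst X" "fst (zjoin (zjoin graph_empty Y) graph_empty) = fst X"
    using n by (simp_all add: graph_empty_def)
  show ?thesis unfolding graph_iso_def n2
  proof (intro conjI exI[of _ f] allI impI)
    show "bij_betw f {..<fst X} {..<fst X}" using b n by simp
    fix u v assume u: "u < fst X" and v: "v < fst X"
    show "snd (zjoin (zjoin X graph_empty) graph_empty) u v = snd (zjoin (zjoin graph_empty Y) graph_empty) (f u) (f v)"
      using l[OF u v] r[OF fb[OF u] fb[OF v]] e u v by simp
  qed simp
qed

theorem mainTheorem15: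
  shows "\<not> (\<exists>x. zf_wf x \<and> zf_eq (zf_mul x x) zf_K2)"
proof
  assume "\<exists>x. zf_wf x \<and> zf_eq (zf_mul x x) zf_K2"
  then obtain a b where wf: "zf_wf (a,b)" and eq: "zf_eq (zf_mul (a,b) (a,b)) zf_K2" by auto
  have nz: "\<not> zr_eq b zr_zero" using wf by (simp add: zf_wf_def)
  have e: "zr_eq (zr_mul (zr_mul a a) zr_one) (zr_mul zr_K2 (zr_mul b b))"
    using eq by (simp add: zf_eq_def zf_mul_def zf_K2_def)
  have cc: "hc V T R {} (fst b) = hc V T R {} (snd b)" if "finite V" "V \<noteq> {}" "conn V T R" for V T R
  proof -
    have "phi V T R (zr_mul (zr_mul a a) zr_one) = phi V T R (zr_mul zr_K2 (zr_mul b b))"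
      by (rule phi_eq[OF that(1,3) e])
    then have "(phi V T R a)^2 = 2 * (phi V T R b)^2"
      using that by (simp add: phi_mul phi_one phi_K2 power2_eq_square)
    then have "phi V T R b = 0" by (rule sq2)
    then show ?thesis by (simp add: phi_def)
  qed
  have H: "hc V T R D (fst b) = hc V T R D (snd b)" if "finite V" "finite D" for V T R D
  proof (rule all_D[OF _ that])
    fix R' show "hc V T R' {} (fst b) = hc V T R' {} (snd b)"
      using all_patterns[of "fst b" "snd b" V T R'] cc that(1) by blast
  qed
  have "graph_iso (fst b) (snd b)" by (rule iso_from_counts) (use H in auto)
  note iz = iso_zero[OF this]
  have "graph_wf graph_empty" by (simp add: graph_wf_def graph_empty_def)
  then have "zr_eq b zr_zero"
    unfolding zr_eq_def zr_zero_def using iz by (intro exI[of _ graph_empty]) simp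
  then show False using nz by simp
qed

end
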